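(* Let $\widehat P$ be any transition kernel on finite $\mathcal S\times\mathcal A$, $r:\mathcal S\times\mathcal A\to[0,1]$, $n\ge2$ an integer, $s_0\in\mathcal S$, and $\underline{\widehat P}=(1-\frac1n)\widehat P+\frac1n\mathbf 1e_{s_0}^\top$. If a policy $\pi$ is greedy with respect to $r+\underline{\widehat P}h$ for some $h\in\mathbb R^{\mathcal S}$, then $$\widehat V^\star_{1-\frac1n}-\widehat V^\pi_{1-\frac1n}\le(n-1)\,\|\underline{\widehat h}^\star-h\|_{\mathrm{sp}}\,\mathbf 1 .$$
   Context: $\underline{\widehat P}(s'|s,a)=(1-\frac1n)\widehat P(s'|s,a)+\frac1n\mathbb 1\{s'=s_0\}$. For $x\in\mathbb R^{\mathcal S\times\mathcal A}$, a policy $\pi$ is greedy with respect to $x$ if $\sum_a\pi(a|s)x(s,a)=\max_ax(s,a)$ for all $s$; here $(r+\underline{\widehat P}h)(s,a)=r(s,a)+\sum_{s'}\underline{\widehat P}(s'|s,a)h(s')$. $\widehat V^\pi_\gamma=(I-\gamma\widehat P_\pi)^{-1}r_\pi$ and $\widehat V^\star_\gamma=\max_\pi\widehat V^\pi_\gamma$, with $\widehat P_\pi(s,s')=\sum_a\pi(a|s)\widehat P(s'|s,a)$, $r_\pi(s)=\sum_a\pi(a|s)r(s,a)$. $\underline{\widehat h}^\star$ is the optimal bias of the average-reward MDP $(\underline{\widehat P},r)$ (bias $\mathrm{C\text{-}lim}_T\sum_{t<T}(Q_\pi^tr_\pi-Q^\infty_\pi r_\pi)$ with $Q=\underline{\widehat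 P}$ of a Blackwell-optimal policy). $\|x\|_{\mathrm{sp}}=\max x-\min x$. *)

theory Defs
  imports "HOL-Analysis.Analysis"
begin

definition is_kernel :: "('s::finite \<Rightarrow> 'a::finite \<Rightarrow> 's \<Rightarrow> real) \<Rightarrow> bool" where
  "is_kernel P \<longleftrightarrow> (\<forall>s a s'. 0 \<le> P s a s') \<and> (\<forall>s a. (\<Sum>s'\<in>UNIV. P s a s') = 1)"

definition is_policy :: "('s::finite \<Rightarrow> 'a::finite \<Rightarrow> real) \<Rightarrow> bool" where
  "is_policy pol \<longleftrightarrow> (\<forall>s a. 0 \<le> pol s a) \<and> (\<forall>s. (\<Sum>a\<in>UNIV. pol s a) = 1)"

definition Ppi :: "('s::finite \<Rightarrow> 'a::finite \<Rightarrow> 's \<Rightarrow> real) \<Rightarrow> ('s \<Rightarrow> 'a \<Rightarrow> real) \<Rightarrow> real^'s^'s" where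
  "Ppi P pol = (\<chi> s s'. \<Sum>a\<in>UNIV. pol s a * P s a s')"

definition rpi :: "('s::finite \<Rightarrow> 'a::finite \<Rightarrow> real) \<Rightarrow> ('s \<Rightarrow> 'a \<Rightarrow> real) \<Rightarrow> real^'s" where
  "rpi r pol = (\<chi> s. \<Sum>a\<in>UNIV. pol s a * r s a)"

definition Vpi :: "real \<Rightarrow> ('s::finite \<Rightarrow> 'a::finite \<Rightarrow> 's \<Rightarrow> real) \<Rightarrow> ('s \<Rightarrow> 'a \<Rightarrow> real)
                   \<Rightarrow> ('s \<Rightarrow> 'a \<Rightarrow> real) \<Rightarrow> real^'s" where
  "Vpi \<gamma> P r pol = matrix_inv (mat 1 - \<gamma> *\<^sub>R Ppi P pol) *v rpi r pol"

definition Vstar :: "real \<Rightarrow> ('s::finite \<Rightarrow> 'a::finite \<Rightarrow> 's \<Rightarrow> real) \<Rightarrow> ('s \<Rightarrow> 'a \<Rightarrow> real) \<Rightarrow> real^'s" where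
  "Vstar \<gamma> P r = (\<chi> s. SUP pol\<in>{pol. is_policy pol}. Vpi \<gamma> P r pol $ s)"

definition anchored :: "nat \<Rightarrow> 's \<Rightarrow> ('s \<Rightarrow> 'a \<Rightarrow> 's \<Rightarrow> real) \<Rightarrow> ('s \<Rightarrow> 'a \<Rightarrow> 's \<Rightarrow> real)" where
  "anchored n s0 P = (\<lambda>s a s'. (1 - 1 / real n) * P s a s' + (1 / real n) * (if s' = s0 then 1 else 0))"

definition qval :: "('s::finite \<Rightarrow> 'a \<Rightarrow> real) \<Rightarrow> ('s \<Rightarrow> 'a \<Rightarrow> 's \<Rightarrow> real) \<Rightarrow> ('s \<Rightarrow> real) \<Rightarrow> 's \<Rightarrow> 'a \<Rightarrow> real" where
  "qval r Q h = (\<lambda>s a. r s a + (\<Sum>s'\<in>UNIV. Q s a s' * h s'))"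

definition greedy :: "('s \<Rightarrow> 'a::finite \<Rightarrow> real) \<Rightarrow> ('s \<Rightarrow> 'a \<Rightarrow> real) \<Rightarrow> bool" where
  "greedy pol x \<longleftrightarrow> (\<forall>s. (\<Sum>a\<in>UNIV. pol s a * x s a) = Max (range (x s)))"

definition sp_norm :: "('s::finite \<Rightarrow> real) \<Rightarrow> real" where
  "sp_norm x = Max (range x) - Min (range x)"

definition cesaro_lim :: "(nat \<Rightarrow> real^'s::finite) \<Rightarrow> real^'s" where
  "cesaro_lim X = lim (\<lambda>T. (1 / real T) *\<^sub>R (\<Sum>t<T. X t))"

definition bias :: "('s::finite \<Rightarrow> 'a::finite \<Rightarrow> 's \<Rightarrow> real) \<Rightarrow> ('s \<Rightarrow> 'a \<Rightarrow> real)
                    \<Rightarrow> ('s \<Rightarrow> 'a \<Rightarrow> real) \<Rightarrow> real^'s" where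
  "bias Q r pol =
     (let pw = (\<lambda>t. ((\<lambda>v. Ppi Q pol *v v) ^^ t) (rpi r pol));
          ginf = cesaro_lim pw
      in cesaro_lim (\<lambda>T. \<Sum>t<T. pw t - ginf))"

definition blackwell_optimal :: "('s::finite \<Rightarrow> 'a::finite \<Rightarrow> 's \<Rightarrow> real) \<Rightarrow> ('s \<Rightarrow> 'a \<Rightarrow> real)
                    \<Rightarrow> ('s \<Rightarrow> 'a \<Rightarrow> real) \<Rightarrow> bool" where
  "blackwell_optimal Q r pol \<longleftrightarrow> is_policy pol \<and>
     (\<exists>\<gamma>0<1. \<forall>\<gamma>. \<gamma>0 < \<gamma> \<and> \<gamma> < 1 \<longrightarrow>
        (\<forall>pol'. is_policy pol' \<longrightarrow> (\<forall>s. Vpi \<gamma> Q r pol' $ s \<le> Vpi \<gamma> Q r pol $ s)))"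

definition optimal_bias :: "('s::finite \<Rightarrow> 'a::finite \<Rightarrow> 's \<Rightarrow> real) \<Rightarrow> ('s \<Rightarrow> 'a \<Rightarrow> real) \<Rightarrow> real^'s" where
  "optimal_bias Q r = bias Q r (SOME pol. blackwell_optimal Q r pol)"

end

theory Submission
  imports Defs "HOL-Computational_Algebra.Polynomial"
begin


definition stoch :: "real^'s::finite^'s \<Rightarrow> bool" where
  "stoch K \<longleftrightarrow> (\<forall>i j. 0 \<le> K$i$j) \<and> (\<forall>i. (\<Sum>j\<in>UNIV. K$i$j) = 1)"

lemma mv_comp: "(K *v v) $ i = (\<Sum>j\<in>UNIV. K$i$j * v$j)"
  by (simp add: matrix_vector_mult_def)

lemma IK_comp: "((mat 1 - x *\<^sub>R K) *v v) $ i = v$i - x * (K *v v)$i"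
  for K :: "real^'s::finite^'s"
  by (simp add: matrix_vector_mult_diff_rdistrib scaleR_matrix_vector_assoc[symmetric])

lemma stoch_le_Max:
  assumes "stoch K" shows "(K *v v)$i \<le> Max (range (\<lambda>j. v$j))"
proof -
  have "(K *v v)$i = (\<Sum>j\<in>UNIV. K$i$j * v$j)" by (rule mv_comp)
  also have "\<dots> \<le> (\<Sum>j\<in>UNIV. K$i$j * Max (range (\<lambda>j. v$j)))"
    using assms by (intro sum_mono mult_left_mono) (auto simp: stoch_def)
  also have "\<dots> = Max (range (\<lambda>j. v$j))" using assms by (simp add: stoch_def sum_distrib_right[symmetric])
  finally show ?thesis .
qed

lemma stoch_ge_Min:
  assumes "stoch K" shows "Min (range (\<lambda>j. v$j)) \<le> (K *v v)$i"
proof -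
  have "Min (range (\<lambda>j. v$j)) = (\<Sum>j\<in>UNIV. K$i$j * Min (range (\<lambda>j. v$j)))"
    using assms by (simp add: stoch_def sum_distrib_right[symmetric])
  also have "\<dots> \<le> (\<Sum>j\<in>UNIV. K$i$j * v$j)"
    using assms by (intro sum_mono mult_left_mono) (auto simp: stoch_def)
  also have "\<dots> = (K *v v)$i" by (rule mv_comp[symmetric])
  finally show ?thesis .
qed

lemma max_principle:
  fixes K :: "real^'s::finite^'s"
  assumes "stoch K" "0 \<le> x" "x < 1" "\<forall>i. D$i \<le> a + x * (K *v D)$i"
  shows "D$i \<le> a / (1 - x)"
proof -
  define M where "M = Max (range (\<lambda>j. D$j))"
  obtain i0 where i0: "D$i0 = M"
  proof -
    have "M \<in> range (\<lambda>j. D$j)" unfolding M_def by (rule Max_in) auto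
    then show ?thesis using that by auto
  qed
  have "M \<le> a + x * M"
    using assms(4)[rule_format, of i0] stoch_le_Max[OF assms(1), of D i0] assms(2) i0
    unfolding M_def by (smt (verit) mult_left_mono)
  then have "M \<le> a / (1 - x)" using assms(3) by (simp add: pos_le_divide_eq algebra_simps)
  moreover have "D$i \<le> M" unfolding M_def by simp
  ultimately show ?thesis by simp
qed

lemma min_principle:
  fixes K :: "real^'s::finite^'s"
  assumes "stoch K" "0 \<le> x" "x < 1" "\<forall>i. a + x * (K *v D)$i \<le> D$i"
  shows "a / (1 - x) \<le> D$i"
proof -
  define M where "M = Min (range (\<lambda>j. D$j))"
  obtain i0 where i0: "D$i0 = M"
  proof -
    have "M \<in> range (\<lambda>j. D$j)" unfolding M_def by (rule Min_in) auto
    then show ?thesis using that by auto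
  qed
  have "a + x * M \<le> M"
    using assms(4)[rule_format, of i0] stoch_ge_Min[OF assms(1), of D i0] assms(2) i0
    unfolding M_def by (smt (verit) mult_left_mono)
  then have "a / (1 - x) \<le> M" using assms(3) by (simp add: pos_divide_le_eq algebra_simps)
  moreover have "M \<le> D$i" unfolding M_def by simp
  ultimately show ?thesis by simp
qed

lemma det_IK_nz:
  fixes K :: "real^'s::finite^'s"
  assumes "stoch K" "0 \<le> x" "x < 1"
  shows "det (mat 1 - x *\<^sub>R K) \<noteq> 0"
proof -
  have "\<forall>v. (mat 1 - x *\<^sub>R K) *v v = 0 \<longrightarrow> v = 0"
  proof (intro allI impI)
    fix v assume h: "(mat 1 - x *\<^sub>R K) *v v = (0::real^'s)"
    then have e: "\<forall>i. v$i = x * (K *v v)$i"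
      by (metis IK_comp eq_iff_diff_eq_0 zero_index)
    have "\<forall>i. v$i \<le> 0 / (1 - x)" using max_principle[OF assms, of v 0] e by simp
    moreover have "\<forall>i. 0 / (1 - x) \<le> v$i" using min_principle[OF assms, of 0 v] e by simp
    ultimately show "v = 0" by (simp add: vec_eq_iff order.antisym)
  qed
  then show ?thesis
    by (simp add: invertible_det_nz[symmetric] invertible_left_inverse matrix_left_invertible_ker)
qed

definition val :: "real \<Rightarrow> real^'s::finite^'s \<Rightarrow> real^'s \<Rightarrow> real^'s" where
  "val x K c = matrix_inv (mat 1 - x *\<^sub>R K) *v c"

lemma matrix_inv_props:
  fixes A :: "real^'s::finite^'s"
  assumes "det A \<noteq> 0"
  shows "A ** matrix_inv A = mat 1" "matrix_inv A ** A = mat 1"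
proof -
  have "\<exists>A'. A ** A' = mat 1 \<and> A' ** A = mat 1"
    using assms by (simp add: invertible_det_nz[symmetric] invertible_def)
  from someI_ex[OF this] show "A ** matrix_inv A = mat 1" "matrix_inv A ** A = mat 1"
    unfolding matrix_inv_def by auto
qed

lemma val_eq:
  fixes K :: "real^'s::finite^'s"
  assumes "stoch K" "0 \<le> x" "x < 1"
  shows "val x K c $ i = c$i + x * (K *v val x K c)$i"
proof -
  have "(mat 1 - x *\<^sub>R K) *v val x K c = c"
    unfolding val_def using matrix_inv_props(1)[OF det_IK_nz[OF assms]]
    by (simp add: matrix_vector_mul_assoc)
  then have "((mat 1 - x *\<^sub>R K) *v val x K c) $ i = c $ i" by simp
  then show ?thesis unfolding IK_comp by simp
qed

lemma val_unique:
  fixes K :: "real^'s::finite^'s"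
  assumes "stoch K" "0 \<le> x" "x < 1" "\<forall>i. u$i = c$i + x * (K *v u)$i"
  shows "val x K c = u"
proof -
  have "(mat 1 - x *\<^sub>R K) *v u = c"
    using assms(4) by (simp add: vec_eq_iff IK_comp)
  then show ?thesis
    unfolding val_def using matrix_inv_props(2)[OF det_IK_nz[OF assms(1-3)]]
    by (metis matrix_vector_mul_assoc matrix_vector_mul_lid)
qed

lemma val_le:
  fixes K :: "real^'s::finite^'s"
  assumes "stoch K" "0 \<le> x" "x < 1" "\<forall>i. c$i + x * (K *v w)$i \<le> w$i"
  shows "val x K c $ i \<le> w $ i"
proof -
  let ?D = "val x K c - w"
  have "\<forall>i. ?D$i \<le> 0 + x * (K *v ?D)$i"
    using assms(4) val_eq[OF assms(1-3), of c]
    by (auto simp: matrix_vector_mult_diff_distrib algebra_simps)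
  from max_principle[OF assms(1-3) this] show ?thesis by simp
qed

lemma val_ge:
  fixes K :: "real^'s::finite^'s"
  assumes "stoch K" "0 \<le> x" "x < 1" "\<forall>i. w$i \<le> c$i + x * (K *v w)$i"
  shows "w $ i \<le> val x K c $ i"
proof -
  let ?D = "val x K c - w"
  have "\<forall>i. 0 + x * (K *v ?D)$i \<le> ?D$i"
    using assms(4) val_eq[OF assms(1-3), of c]
    by (auto simp: matrix_vector_mult_diff_distrib algebra_simps)
  from min_principle[OF assms(1-3) this] show ?thesis by simp
qed



lemma bellman_form:
  "rpi r pol $ s + x * (Ppi P pol *v w)$s = (\<Sum>a\<in>UNIV. pol s a * (r s a + x * (\<Sum>s'\<in>UNIV. P s a s' * w$s')))"
proof -
  have "(Ppi P pol *v w)$s = (\<Sum>s'\<in>UNIV. \<Sum>a\<in>UNIV. pol s a * P s a s' * w$s')"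
    by (simp add: mv_comp Ppi_def sum_distrib_right)
  also have "\<dots> = (\<Sum>a\<in>UNIV. pol s a * (\<Sum>s'\<in>UNIV. P s a s' * w$s'))"
    by (subst sum.swap) (simp add: sum_distrib_left mult.assoc)
  finally show ?thesis
    by (simp add: rpi_def distrib_left sum.distrib sum_distrib_left algebra_simps)
qed

lemma stoch_Ppi:
  assumes "is_kernel P" "is_policy pol" shows "stoch (Ppi P pol)"
proof -
  have "(\<Sum>j\<in>UNIV. \<Sum>a\<in>UNIV. pol i a * P i a j) = 1" for i
    using assms by (subst sum.swap) (simp add: is_kernel_def is_policy_def sum_distrib_left[symmetric])
  then show ?thesis using assms
    by (auto simp: stoch_def Ppi_def is_kernel_def is_policy_def intro!: sum_nonneg)
qed

lemma Vpi_val: "Vpi x P r pol = val x (Ppi P pol) (rpi r pol)"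
  by (simp add: Vpi_def val_def)

definition polD :: "('s \<Rightarrow> 'a) \<Rightarrow> 's \<Rightarrow> 'a \<Rightarrow> real" where
  "polD d s a = (if a = d s then 1 else 0)"

lemma polD_policy: "is_policy (polD (d::'s::finite \<Rightarrow> 'a::finite))"
  by (simp add: is_policy_def polD_def)

lemma bellman_polD:
  "rpi r (polD d) $ s + x * (Ppi P (polD d) *v w)$s = r s (d s) + x * (\<Sum>s'\<in>UNIV. P s (d s) s' * w$s')"
proof -
  have "(\<Sum>a\<in>UNIV. polD d s a * (r s a + x * (\<Sum>s'\<in>UNIV. P s a s' * w$s'))) =
        (\<Sum>a\<in>UNIV. if a = d s then r s a + x * (\<Sum>s'\<in>UNIV. P s a s' * w$s') else 0)"
    by (rule sum.cong) (auto simp: polD_def)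
  then show ?thesis unfolding bellman_form by (simp add: sum.delta')
qed

lemma policy_avg_le:
  assumes "is_policy pol" "\<forall>a. f a \<le> c" shows "(\<Sum>a\<in>UNIV. pol s a * f a) \<le> c"
proof -
  have "(\<Sum>a\<in>UNIV. pol s a * f a) \<le> (\<Sum>a\<in>UNIV. pol s a * c)"
    using assms by (intro sum_mono mult_left_mono) (auto simp: is_policy_def)
  also have "\<dots> = c" using assms by (simp add: is_policy_def sum_distrib_right[symmetric])
  finally show ?thesis .
qed

lemma opt_det:
  fixes P :: "'s::finite \<Rightarrow> 'a::finite \<Rightarrow> 's \<Rightarrow> real"
  assumes "is_kernel P" "0 \<le> x" "x < 1"
  shows "\<exists>d. \<forall>\<sigma>. is_policy \<sigma> \<longrightarrow> (\<forall>s. Vpi x P r \<sigma> $ s \<le> Vpi x P r (polD d) $ s)"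
proof -
  define F where "F d = (\<Sum>s\<in>UNIV. Vpi x P r (polD d) $ s)" for d :: "'s \<Rightarrow> 'a"
  have "Max (range F) \<in> range F" by (rule Max_in) auto
  then obtain d where dM: "F d = Max (range F)" by (metis imageE)
  have dmax: "F d' \<le> F d" for d' unfolding dM by (rule Max_ge) auto
  have st: "\<And>pol. is_policy pol \<Longrightarrow> stoch (Ppi P pol)" using stoch_Ppi[OF assms(1)] .
  define V where "V = Vpi x P r (polD d)"
  have Veq: "V$s = r s (d s) + x * (\<Sum>s'\<in>UNIV. P s (d s) s' * V$s')" for s
    unfolding V_def Vpi_val
    by (subst val_eq[OF st[OF polD_policy] assms(2,3)]) (simp add: bellman_polD[symmetric] Vpi_val)
  have greedy: "r s a + x * (\<Sum>s'\<in>UNIV. P s a s' * V$s') \<le> V$s" for s a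
  proof (rule ccontr)
    assume "\<not> ?thesis"
    then have gt: "V$s < r s a + x * (\<Sum>s'\<in>UNIV. P s a s' * V$s')" by simp
    define d' where "d' = d(s := a)"
    define V' where "V' = Vpi x P r (polD d')"
    have ge: "V$t \<le> V'$t" for t
      unfolding V'_def Vpi_val
    proof (rule val_ge[OF st[OF polD_policy] assms(2,3)], rule allI)
      fix i show "V$i \<le> rpi r (polD d') $ i + x * (Ppi P (polD d') *v V) $ i"
        unfolding bellman_polD using gt Veq[of i] by (cases "i = s") (auto simp: d'_def)
    qed
    have V'eq: "V'$s = r s a + x * (\<Sum>s'\<in>UNIV. P s a s' * V'$s')"
      unfolding V'_def Vpi_val
      by (subst val_eq[OF st[OF polD_policy] assms(2,3)]) (simp add: bellman_polD d'_def)
    have "(\<Sum>s'\<in>UNIV. P s a s' * V$s') \<le> (\<Sum>s'\<in>UNIV. P s a s' * V'$s')"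
      using assms(1) ge by (intro sum_mono mult_left_mono) (auto simp: is_kernel_def)
    then have "V$s < V'$s" using gt V'eq assms(2) by (smt (verit) mult_left_mono)
    then have "F d < F d'"
      unfolding F_def V_def[symmetric] V'_def[symmetric]
      by (intro sum_strict_mono_ex1) (auto intro: ge)
    with dmax[of d'] show False by simp
  qed
  show ?thesis
  proof (intro exI allI impI)
    fix \<sigma> :: "'s \<Rightarrow> 'a \<Rightarrow> real" and s assume "is_policy \<sigma>"
    have "val x (Ppi P \<sigma>) (rpi r \<sigma>) $ s \<le> V $ s"
    proof (rule val_le[OF st[OF \<open>is_policy \<sigma>\<close>] assms(2,3)], rule allI)
      fix i show "rpi r \<sigma> $ i + x * (Ppi P \<sigma> *v V) $ i \<le> V $ i"
        unfolding bellman_form using \<open>is_policy \<sigma>\<close> greedy by (intro policy_avg_le) auto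
    qed
    then show "Vpi x P r \<sigma> $ s \<le> Vpi x P r (polD d) $ s" by (simp add: V_def Vpi_val)
  qed
qed



definition detp :: "('s::finite \<Rightarrow> 's \<Rightarrow> real poly) \<Rightarrow> real poly" where
  "detp M = (\<Sum>p\<in>{p. p permutes (UNIV::'s set)}. of_int (sign p) * (\<Prod>i\<in>UNIV. M i (p i)))"

lemma poly_detp: "poly (detp M) x = det (\<chi> i j. poly (M i j) x)"
  by (simp add: detp_def det_def poly_sum poly_prod)

definition AM :: "real^'s::finite^'s \<Rightarrow> 's \<Rightarrow> 's \<Rightarrow> real poly" where
  "AM K i j = [: (if i = j then 1 else 0), - K$i$j :]"

definition DM :: "real^'s::finite^'s \<Rightarrow> real poly" where
  "DM K = detp (AM K)"

definition NM :: "real^'s::finite^'s \<Rightarrow> real^'s \<Rightarrow> 's \<Rightarrow> real poly" where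
  "NM K c k = detp (\<lambda>i j. if j = k then [: c$i :] else AM K i j)"

lemma AM_eval: "(\<chi> i j. poly (AM K i j) x) = mat 1 - x *\<^sub>R K"
  by (simp add: vec_eq_iff AM_def mat_def algebra_simps)

lemma DM_eval: "poly (DM K) x = det (mat 1 - x *\<^sub>R K)"
  by (simp add: DM_def poly_detp AM_eval)

lemma NM_eval: "poly (NM K c k) x = det (\<chi> i j. if j = k then c$i else (mat 1 - x *\<^sub>R K)$i$j)"
proof -
  have "(\<chi> i j. poly (if j = k then [: c$i :] else AM K i j) x) = (\<chi> i j. if j = k then c$i else (mat 1 - x *\<^sub>R K)$i$j)"
    by (simp add: vec_eq_iff AM_def mat_def algebra_simps)
  then show ?thesis by (simp add: NM_def poly_detp if_distrib cong: if_cong)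
qed

lemma cont_poly: "continuous_on S (poly (p :: real poly))"
  using continuous_on_poly[of S "\<lambda>x. x" p] continuous_on_id by simp

lemma val_solves:
  fixes K :: "real^'s::finite^'s"
  assumes "stoch K" "0 \<le> x" "x < 1"
  shows "(mat 1 - x *\<^sub>R K) *v val x K c = c"
  unfolding val_def using matrix_inv_props(1)[OF det_IK_nz[OF assms]]
  by (simp add: matrix_vector_mul_assoc)

lemma val_rat:
  fixes K :: "real^'s::finite^'s"
  assumes "stoch K" "0 \<le> x" "x < 1"
  shows "val x K c $ k = poly (NM K c k) x / poly (DM K) x"
  using cramer[OF det_IK_nz[OF assms], of "val x K c" c] val_solves[OF assms]
  by (simp add: NM_eval DM_eval)

lemma DM_pos:
  fixes K :: "real^'s::finite^'s"
  assumes "stoch K" "0 \<le> x" "x < 1"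
  shows "0 < poly (DM K) x"
proof (rule ccontr)
  assume "\<not> ?thesis"
  then have "poly (DM K) x \<le> 0" by simp
  moreover have "poly (DM K) 0 = 1" by (simp add: DM_eval)
  ultimately obtain z where z: "0 \<le> z" "z \<le> x" "poly (DM K) z = 0"
    using IVT2'[of "poly (DM K)" x 0 0] assms(2) by (auto intro: cont_poly)
  then show False using det_IK_nz[OF assms(1) z(1)] assms(3) by (simp add: DM_eval)
qed

lemma poly_sgn_const:
  fixes q :: "real poly"
  assumes "\<forall>z. a < z \<and> z < b \<longrightarrow> poly q z \<noteq> 0" "a < x" "x < b" "a < y" "y < b"
  shows "0 < poly q x \<longleftrightarrow> 0 < poly q y"
proof -
  have *: "0 < poly q u \<Longrightarrow> 0 < poly q v" if "a < u" "u < b" "a < v" "v < b" for u v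
  proof (rule ccontr)
    assume p: "0 < poly q u" "\<not> 0 < poly q v"
    then have n: "poly q v < 0" using assms(1) that by force
    show False
    proof (cases "u \<le> v")
      case True
      then obtain z where "u \<le> z" "z \<le> v" "poly q z = 0"
        using IVT2'[of "poly q" v 0 u] p n by (auto intro: cont_poly)
      then show False using assms(1) that by force
    next
      case False
      then obtain z where "v \<le> z" "z \<le> u" "poly q z = 0"
        using IVT'[of "poly q" v 0 u] p n by (auto intro: cont_poly)
      then show False using assms(1) that by force
    qed
  qed
  show ?thesis using *[of x y] *[of y x] assms by blast
qed

lemma sign_const:
  fixes K1 K2 :: "real^'s::finite^'s"
  assumes "stoch K1" "stoch K2" "0 < g" "g \<le> 1"
  shows "\<exists>x0. 0 \<le> x0 \<and> x0 < g \<and> (\<forall>x y. x0 < x \<and> x < g \<and> x0 < y \<and> y < g \<longrightarrow>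
            0 \<le> val x K1 c1 $ s - val x K2 c2 $ s \<longrightarrow> 0 \<le> val y K1 c1 $ s - val y K2 c2 $ s)"
proof -
  define q where "q = NM K1 c1 s * DM K2 - NM K2 c2 s * DM K1"
  have f: "val x K1 c1 $ s - val x K2 c2 $ s = poly q x / (poly (DM K1) x * poly (DM K2) x)"
    if "0 \<le> x" "x < 1" for x
    using DM_pos[OF assms(1) that] DM_pos[OF assms(2) that]
    by (simp add: val_rat[OF assms(1) that] val_rat[OF assms(2) that] q_def field_simps)
  have dpos: "0 < poly (DM K1) x * poly (DM K2) x" if "0 \<le> x" "x < 1" for x
    using DM_pos[OF assms(1) that] DM_pos[OF assms(2) that] by simp
  show ?thesis
  proof (cases "q = 0")
    case True
    then show ?thesis using f assms by (intro exI[of _ 0]) auto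
  next
    case False
    define R where "R = insert 0 {z. poly q z = 0 \<and> z < g}"
    have fin: "finite R" unfolding R_def using poly_roots_finite[OF False] by auto
    define x0 where "x0 = Max R"
    have x0: "0 \<le> x0" "x0 < g" using fin assms(3) unfolding x0_def R_def by auto
    have nz: "\<forall>z. x0 < z \<and> z < g \<longrightarrow> poly q z \<noteq> 0"
    proof (intro allI impI)
      fix z assume z: "x0 < z \<and> z < g"
      show "poly q z \<noteq> 0"
      proof
        assume "poly q z = 0"
        then have "z \<in> R" using z unfolding R_def by auto
        then have "z \<le> x0" unfolding x0_def using fin by simp
        then show False using z by simp
      qed
    qed
    show ?thesis
    proof (intro exI[of _ x0] conjI x0 allI impI)
      fix x y assume xy: "x0 < x \<and> x < g \<and> x0 < y \<and> y < g"
        and h: "0 \<le> val x K1 c1 $ s - val x K2 c2 $ s"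
      have xr: "0 \<le> x" "x < 1" "0 \<le> y" "y < 1" using xy x0 assms by auto
      have "poly q x \<noteq> 0" using nz xy by auto
      moreover have "0 \<le> poly q x" using h f[OF xr(1,2)] dpos[OF xr(1,2)]
        by (simp add: zero_le_divide_iff)
      ultimately have "0 < poly q x" by simp
      then have "0 < poly q y" using poly_sgn_const[OF nz] xy by blast
      then show "0 \<le> val y K1 c1 $ s - val y K2 c2 $ s"
        using f[OF xr(3,4)] dpos[OF xr(3,4)] by simp
    qed
  qed
qed



lemma anch_kernel:
  assumes "is_kernel P" "1 \<le> n" shows "is_kernel (anchored n s0 P)"
proof -
  have n: "1 / real n \<le> 1" "0 \<le> 1 - 1 / real n" using assms(2) by auto
  have "(\<Sum>s'\<in>UNIV. (1 - 1 / real n) * P s a s' + 1 / real n * (if s' = s0 then 1 else 0)) = 1" for s a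
    using assms(1) by (simp add: sum.distrib sum_distrib_left[symmetric] is_kernel_def sum_divide_distrib[symmetric])
  then show ?thesis using assms n unfolding is_kernel_def anchored_def
    by (auto intro!: add_nonneg_nonneg mult_nonneg_nonneg)
qed

lemma Ppi_anch:
  assumes "is_policy pol"
  shows "(Ppi (anchored n s0 P) pol *v w)$s = (1 - 1/real n) * (Ppi P pol *v w)$s + (1/real n) * w$s0"
proof -
  have e: "Ppi (anchored n s0 P) pol $ s $ s' = (1 - 1/real n) * Ppi P pol $ s $ s' + (1/real n) * (if s' = s0 then 1 else 0)" for s'
  proof -
    have "Ppi (anchored n s0 P) pol $ s $ s' = (\<Sum>a\<in>UNIV. pol s a * ((1 - 1 / real n) * P s a s')) + (\<Sum>a\<in>UNIV. pol s a) * (1 / real n * (if s' = s0 then 1 else 0))"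
      by (simp add: Ppi_def anchored_def distrib_left sum.distrib sum_distrib_right sum_divide_distrib[symmetric])
    also have "\<dots> = (1 - 1/real n) * Ppi P pol $ s $ s' + (1/real n) * (if s' = s0 then 1 else 0)"
      using assms by (simp add: is_policy_def Ppi_def sum_distrib_left algebra_simps)
    finally show ?thesis .
  qed
  have "(Ppi (anchored n s0 P) pol *v w)$s = (\<Sum>j\<in>UNIV. (1 - 1/real n) * (Ppi P pol $ s $ j * w$j) + (if j = s0 then (1/real n) * w$j else 0))"
    unfolding mv_comp e by (rule sum.cong) (auto simp: algebra_simps)
  also have "\<dots> = (1 - 1/real n) * (Ppi P pol *v w)$s + (1/real n) * w$s0"
    by (simp add: sum.distrib sum.delta' mv_comp sum_distrib_left)
  finally show ?thesis .
qed

lemma stoch_shift: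
  assumes "stoch K" shows "(K *v (\<chi> j. v$j + c))$i = (K *v v)$i + c"
  using assms by (simp add: mv_comp distrib_left sum.distrib stoch_def sum_distrib_right[symmetric])

lemma Vpi_anch:
  fixes P :: "'s::finite \<Rightarrow> 'a::finite \<Rightarrow> 's \<Rightarrow> real"
  assumes "is_kernel P" "is_policy \<sigma>" "2 \<le> n" "0 \<le> \<beta>" "\<beta> < 1"
  shows "Vpi \<beta> (anchored n s0 P) r \<sigma> $ s = Vpi (\<beta> * (1 - 1/real n)) P r \<sigma> $ s
          + (\<beta> * (1/real n) / (1 - \<beta>)) * Vpi (\<beta> * (1 - 1/real n)) P r \<sigma> $ s0"
proof -
  define g where "g = 1 - 1/real n"
  define k where "k = \<beta> * (1/real n) / (1 - \<beta>)"
  define u where "u = Vpi (\<beta> * g) P r \<sigma>"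
  have g: "0 \<le> g" "g < 1" using assms(3) unfolding g_def by auto
  have bg: "0 \<le> \<beta> * g" "\<beta> * g < 1" using g assms(4,5) by (auto simp: mult_le_one mult_less_cancel_right2 intro: le_less_trans[OF mult_left_le_one_le])
  have st: "stoch (Ppi P \<sigma>)" using stoch_Ppi[OF assms(1,2)] .
  have stQ: "stoch (Ppi (anchored n s0 P) \<sigma>)" using stoch_Ppi[OF anch_kernel[OF assms(1)] assms(2)] assms(3) by simp
  have ueq: "u$i = rpi r \<sigma> $ i + (\<beta> * g) * (Ppi P \<sigma> *v u)$i" for i
    unfolding u_def Vpi_val by (rule val_eq[OF st bg])
  have kk: "k * (1 - \<beta>) = \<beta> * (1/real n)" unfolding k_def using assms(5) by simp
  define w where "w = (\<chi> j. u$j + k * u$s0)"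
  have "val \<beta> (Ppi (anchored n s0 P) \<sigma>) (rpi r \<sigma>) = w"
  proof (rule val_unique[OF stQ assms(4,5)], rule allI)
    fix i
    have "rpi r \<sigma> $ i + \<beta> * (Ppi (anchored n s0 P) \<sigma> *v w) $ i
        = rpi r \<sigma> $ i + \<beta> * (g * ((Ppi P \<sigma> *v u)$i + k * u$s0) + (1/real n) * (u$s0 + k * u$s0))"
      unfolding Ppi_anch[OF assms(2)] w_def stoch_shift[OF st] g_def by simp
    also have "\<dots> = u$i + (\<beta> * g * k + \<beta> * (1/real n) + \<beta> * (1/real n) * k) * u$s0"
      using ueq[of i] by (simp add: algebra_simps)
    also have "\<beta> * g * k + \<beta> * (1/real n) + \<beta> * (1/real n) * k = k"
      using kk unfolding g_def by (simp add: algebra_simps)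
    finally show "w $ i = rpi r \<sigma> $ i + \<beta> * (Ppi (anchored n s0 P) \<sigma> *v w) $ i"
      by (simp add: w_def)
  qed
  then show ?thesis by (simp add: Vpi_val[symmetric] w_def u_def g_def k_def)
qed



lemma bw_exists:
  fixes P :: "'s::finite \<Rightarrow> 'a::finite \<Rightarrow> 's \<Rightarrow> real"
  assumes "is_kernel P" "2 \<le> n"
  shows "\<exists>pol. blackwell_optimal (anchored n s0 P) r pol"
proof -
  define g where "g = 1 - 1/real n"
  have g: "0 < g" "g < 1" using assms(2) unfolding g_def by auto
  have st: "\<And>pol. is_policy pol \<Longrightarrow> stoch (Ppi P pol)" using stoch_Ppi[OF assms(1)] .
  define Q where "Q t x0 \<longleftrightarrow> 0 \<le> x0 \<and> x0 < g \<and> (\<forall>x y. x0 < x \<and> x < g \<and> x0 < y \<and> y < g \<longrightarrow>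
            0 \<le> Vpi x P r (polD (fst t)) $ snd (snd t) - Vpi x P r (polD (fst (snd t))) $ snd (snd t) \<longrightarrow>
            0 \<le> Vpi y P r (polD (fst t)) $ snd (snd t) - Vpi y P r (polD (fst (snd t))) $ snd (snd t))"
    for t :: "('s \<Rightarrow> 'a) \<times> ('s \<Rightarrow> 'a) \<times> 's" and x0
  have "\<forall>t. \<exists>x0. Q t x0"
    unfolding Q_def Vpi_val
    using sign_const[OF st[OF polD_policy] st[OF polD_policy] g(1) less_imp_le[OF g(2)]] by blast
  then obtain X where X: "\<And>t. Q t (X t)" by metis
  define x0 where "x0 = Max (range X)"
  have x0: "0 \<le> x0" "x0 < g"
  proof -
    have "x0 \<in> range X" unfolding x0_def by (rule Max_in) auto
    then obtain t where "x0 = X t" by auto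
    then show "0 \<le> x0" "x0 < g" using X[of t] unfolding Q_def by auto
  qed
  have sc: "\<And>x y d d' s. x0 < x \<Longrightarrow> x < g \<Longrightarrow> x0 < y \<Longrightarrow> y < g \<Longrightarrow>
     0 \<le> Vpi x P r (polD d) $ s - Vpi x P r (polD d') $ s \<Longrightarrow>
     0 \<le> Vpi y P r (polD d) $ s - Vpi y P r (polD d') $ s"
  proof -
    fix x y d d' s assume h: "x0 < x" "x < g" "x0 < y" "y < g"
      "0 \<le> Vpi x P r (polD d) $ s - Vpi x P r (polD d') $ s"
    have "X (d, d', s) \<le> x0" unfolding x0_def by (rule Max_ge) auto
    show "0 \<le> Vpi y P r (polD d) $ s - Vpi y P r (polD d') $ s"
    proof -
      have "\<forall>x y. X (d, d', s) < x \<and> x < g \<and> X (d, d', s) < y \<and> y < g \<longrightarrow>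
            0 \<le> Vpi x P r (polD d) $ s - Vpi x P r (polD d') $ s \<longrightarrow> 0 \<le> Vpi y P r (polD d) $ s - Vpi y P r (polD d') $ s"
        using X[of "(d, d', s)"] unfolding Q_def fst_conv snd_conv by blast
      then show ?thesis using h \<open>X (d, d', s) \<le> x0\<close> by (meson le_less_trans)
    qed
  qed
  define x1 where "x1 = (x0 + g) / 2"
  have x1: "x0 < x1" "x1 < g" using x0 unfolding x1_def by auto
  obtain ds where ds: "\<And>\<sigma> s. is_policy \<sigma> \<Longrightarrow> Vpi x1 P r \<sigma> $ s \<le> Vpi x1 P r (polD ds) $ s"
    using opt_det[OF assms(1), of x1 r] x0 x1 g by auto
  have opt: "Vpi x P r \<sigma> $ s \<le> Vpi x P r (polD ds) $ s"
    if hx: "x0 < x" "x < g" "is_policy \<sigma>" for x \<sigma> s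
  proof -
    obtain dx where dx: "\<And>\<sigma> s. is_policy \<sigma> \<Longrightarrow> Vpi x P r \<sigma> $ s \<le> Vpi x P r (polD dx) $ s"
      using opt_det[OF assms(1), of x r] x0 hx g by auto
    have "0 \<le> Vpi x1 P r (polD ds) $ s - Vpi x1 P r (polD dx) $ s"
      using ds[OF polD_policy] by simp
    then have "0 \<le> Vpi x P r (polD ds) $ s - Vpi x P r (polD dx) $ s"
      using sc[OF x1 that(1,2)] by blast
    then show ?thesis using dx[OF that(3), of s] by simp
  qed
  show ?thesis
  proof (intro exI[of _ "polD ds"], unfold blackwell_optimal_def, intro conjI polD_policy exI[of _ "x0 / g"] allI impI)
    show "x0 / g < 1" using x0 g by simp
    fix \<beta> and \<sigma> :: "'s \<Rightarrow> 'a \<Rightarrow> real" and s assume b: "x0 / g < \<beta> \<and> \<beta> < 1" and \<sigma>: "is_policy \<sigma>"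
    have b0: "0 \<le> \<beta>" using b x0 g by (smt (verit) divide_nonneg_pos)
    have bx: "x0 < \<beta> * g" "\<beta> * g < g" using b g by (auto simp: pos_divide_less_eq)
    have k: "0 \<le> \<beta> * (1/real n) / (1 - \<beta>)" using b b0 by simp
    have "Vpi (\<beta> * g) P r \<sigma> $ s + (\<beta> * (1/real n) / (1 - \<beta>)) * Vpi (\<beta> * g) P r \<sigma> $ s0
       \<le> Vpi (\<beta> * g) P r (polD ds) $ s + (\<beta> * (1/real n) / (1 - \<beta>)) * Vpi (\<beta> * g) P r (polD ds) $ s0"
      using opt[OF bx \<sigma>, of s] opt[OF bx \<sigma>, of s0] k by (intro add_mono mult_left_mono) auto
    then show "Vpi \<beta> (anchored n s0 P) r \<sigma> $ s \<le> Vpi \<beta> (anchored n s0 P) r (polD ds) $ s"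
      unfolding Vpi_anch[OF assms(1) \<sigma> assms(2) b0 conjunct2[OF b]]
        Vpi_anch[OF assms(1) polD_policy assms(2) b0 conjunct2[OF b]] g_def .
  qed
qed



lemma Max_range_le: "(\<And>j. f j \<le> B) \<Longrightarrow> Max (range (f :: 'b::finite \<Rightarrow> real)) \<le> B"
  by (simp add: Max_le_iff)

lemma val_bounds:
  fixes K :: "real^'s::finite^'s"
  assumes "stoch K" "0 \<le> y" "y < 1" "\<forall>i. 0 \<le> c$i \<and> c$i \<le> 1"
  shows "0 \<le> val y K c $ i" "val y K c $ i \<le> 1 / (1 - y)"
proof -
  let ?u = "val y K c"
  have "\<forall>i. ?u$i \<le> 1 + y * (K *v ?u)$i"
  proof
    fix i show "?u$i \<le> 1 + y * (K *v ?u)$i" using val_eq[OF assms(1-3), of c i] assms(4) by smt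
  qed
  from max_principle[OF assms(1-3) this] show "val y K c $ i \<le> 1 / (1 - y)" .
  have "\<forall>i. 0 + y * (K *v ?u)$i \<le> ?u$i" using val_eq[OF assms(1-3)] assms(4) by simp
  from min_principle[OF assms(1-3) this] show "0 \<le> val y K c $ i" by simp
qed

lemma val_lip:
  fixes K :: "real^'s::finite^'s"
  assumes "stoch K" "0 \<le> x" "x \<le> y" "y < 1" "\<forall>i. 0 \<le> c$i \<and> c$i \<le> 1"
  shows "val y K c $ i \<le> val x K c $ i + (y - x) / ((1 - y) * (1 - x))"
    "val x K c $ i \<le> val y K c $ i"
proof -
  have y0: "0 \<le> y" and x1: "x < 1" using assms by auto
  let ?u = "val y K c" and ?v = "val x K c"
  let ?D = "?u - ?v"
  have Ku: "0 \<le> (K *v ?u)$j" "(K *v ?u)$j \<le> 1 / (1 - y)" for j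
  proof -
    show "(K *v ?u)$j \<le> 1 / (1 - y)"
    proof -
      have "Max (range (\<lambda>j. ?u$j)) \<le> 1/(1-y)"
        by (rule Max_range_le) (rule val_bounds(2)[OF assms(1) y0 assms(4,5)])
      then show ?thesis using stoch_le_Max[OF assms(1), of ?u j] by linarith
    qed
    show "0 \<le> (K *v ?u)$j"
      using stoch_ge_Min[OF assms(1), of ?u j] val_bounds(1)[OF assms(1) y0 assms(4,5)]
      by (smt (verit, del_insts) Min_in UNIV_not_empty finite finite_imageI image_iff image_is_empty)
  qed
  have De: "?D$j = x * (K *v ?D)$j + (y - x) * (K *v ?u)$j" for j
    using val_eq[OF assms(1) y0 assms(4), of c j] val_eq[OF assms(1,2) x1, of c j]
    by (simp add: matrix_vector_mult_diff_distrib algebra_simps)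
  have "\<forall>j. ?D$j \<le> (y - x) / (1 - y) + x * (K *v ?D)$j"
  proof
    fix j have "(y - x) * (K *v ?u)$j \<le> (y - x) * (1 / (1 - y))"
      using Ku(2)[of j] assms(3) by (intro mult_left_mono) auto
    then show "?D$j \<le> (y - x) / (1 - y) + x * (K *v ?D)$j" using De[of j] by simp
  qed
  from max_principle[OF assms(1,2) x1 this, of i]
  show "val y K c $ i \<le> val x K c $ i + (y - x) / ((1 - y) * (1 - x))" by simp
  have "\<forall>j. 0 + x * (K *v ?D)$j \<le> ?D$j"
    using De Ku(1) assms(3) by (simp add: add_increasing2)
  from min_principle[OF assms(1,2) x1 this, of i]
  show "val x K c $ i \<le> val y K c $ i" by simp
qed

lemma rpi_bounds:
  assumes "\<forall>s a. 0 \<le> r s a \<and> r s a \<le> 1" "is_policy pol"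
  shows "\<forall>i. 0 \<le> rpi r pol $ i \<and> rpi r pol $ i \<le> 1"
proof
  fix i
  have "rpi r pol $ i = (\<Sum>a\<in>UNIV. pol i a * r i a)" by (simp add: rpi_def)
  moreover have "(\<Sum>a\<in>UNIV. pol i a * r i a) \<le> 1" using assms by (intro policy_avg_le) auto
  moreover have "0 \<le> (\<Sum>a\<in>UNIV. pol i a * r i a)" using assms by (auto intro!: sum_nonneg simp: is_policy_def)
  ultimately show "0 \<le> rpi r pol $ i \<and> rpi r pol $ i \<le> 1" by simp
qed

lemma aux_contra: "(a::real) \<le> b + e \<Longrightarrow> e \<le> (a - b) / 2 \<Longrightarrow> 0 < a - b \<Longrightarrow> False"
  by (simp add: field_simps)

lemma bw_opt:
  fixes P :: "'s::finite \<Rightarrow> 'a::finite \<Rightarrow> 's \<Rightarrow> real"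
  assumes "is_kernel P" "2 \<le> n" "\<forall>s a. 0 \<le> r s a \<and> r s a \<le> 1"
    and bw: "blackwell_optimal (anchored n s0 P) r b"
    and \<sigma>: "is_policy \<sigma>"
  shows "Vpi (1 - 1/real n) P r \<sigma> $ s \<le> Vpi (1 - 1/real n) P r b $ s"
proof -
  define g where "g = 1 - 1/real n"
  have g: "0 < g" "g < 1" using assms(2) unfolding g_def by auto
  have st: "\<And>pol. is_policy pol \<Longrightarrow> stoch (Ppi P pol)" using stoch_Ppi[OF assms(1)] .
  have bpol: "is_policy b" using bw by (simp add: blackwell_optimal_def)
  obtain L where L: "L < 1" and Lb: "\<And>\<beta> pol' s. L < \<beta> \<Longrightarrow> \<beta> < 1 \<Longrightarrow> is_policy pol' \<Longrightarrow>
      Vpi \<beta> (anchored n s0 P) r pol' $ s \<le> Vpi \<beta> (anchored n s0 P) r b $ s"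
    using bw unfolding blackwell_optimal_def by blast
  define L' where "L' = max L 0"
  have L': "0 \<le> L'" "L' < 1" "L \<le> L'" using L unfolding L'_def by auto
  have near: "Vpi x P r \<sigma> $ t \<le> Vpi x P r b $ t" if x: "L' * g < x" "x < g" for x t
  proof -
    define \<beta> where "\<beta> = x / g"
    have bx: "x = \<beta> * g" unfolding \<beta>_def using g by simp
    have b: "L' < \<beta>" "\<beta> < 1" using x g unfolding \<beta>_def by (auto simp: pos_less_divide_eq)
    have b0: "0 \<le> \<beta>" using b L' by simp
    have bgx: "0 \<le> x" "x < 1" using x g L' by (auto intro: order.trans[OF _ less_imp_le[OF x(1)]])
    obtain d where d: "\<And>pol s. is_policy pol \<Longrightarrow> Vpi x P r pol $ s \<le> Vpi x P r (polD d) $ s"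
      using opt_det[OF assms(1) bgx, of r] by auto
    define k where "k = \<beta> * (1/real n) / (1 - \<beta>)"
    have k: "0 \<le> k" using b b0 unfolding k_def by simp
    have eqQ: "Vpi \<beta> (anchored n s0 P) r pol $ s = Vpi x P r pol $ s + k * Vpi x P r pol $ s0"
      if "is_policy pol" for pol s
      using Vpi_anch[OF assms(1) that assms(2) b0 b(2), of s0 r s] unfolding bx k_def g_def by simp
    have ge: "Vpi x P r (polD d) $ s + k * Vpi x P r (polD d) $ s0 \<le> Vpi x P r b $ s + k * Vpi x P r b $ s0" for s
      using Lb[of \<beta> "polD d" s] b L' polD_policy eqQ[OF polD_policy] eqQ[OF bpol] by force
    have le: "Vpi x P r b $ s \<le> Vpi x P r (polD d) $ s" for s using d[OF bpol] .
    have "Vpi x P r b $ s0 = Vpi x P r (polD d) $ s0"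
    proof -
      have "(1 + k) * Vpi x P r (polD d) $ s0 \<le> (1 + k) * Vpi x P r b $ s0"
        using ge[of s0] by (simp add: algebra_simps)
      then have "Vpi x P r (polD d) $ s0 \<le> Vpi x P r b $ s0" using k
        by (smt (verit) mult_le_cancel_left_pos)
      then show ?thesis using le[of s0] by simp
    qed
    then have "Vpi x P r (polD d) $ t \<le> Vpi x P r b $ t" using ge[of t] by simp
    then show ?thesis using d[OF \<sigma>, of t] by simp
  qed
  show ?thesis
  proof (rule ccontr)
    assume "\<not> ?thesis"
    then have gt: "Vpi g P r b $ s < Vpi g P r \<sigma> $ s" unfolding g_def by simp
    define \<delta> where "\<delta> = Vpi g P r \<sigma> $ s - Vpi g P r b $ s"
    have \<delta>: "0 < \<delta>" using gt unfolding \<delta>_def by simp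
    define t where "t = min ((g - L' * g) / 2) (\<delta> * (1 - g)^2 / 2)"
    have t: "0 < t" using \<delta> g L' unfolding t_def by (auto simp: mult_less_cancel_right2)
    define x where "x = g - t"
    have Lg: "L' * g < g" using L' g by simp
    have "t \<le> (g - L' * g) / 2" unfolding t_def by (rule min.cobounded1)
    then have x: "L' * g < x" "x < g" using t Lg unfolding x_def by auto
    have x0: "0 \<le> x" using x L' g by (smt (verit) mult_nonneg_nonneg)
    have rb: "\<forall>i. 0 \<le> rpi r \<sigma> $ i \<and> rpi r \<sigma> $ i \<le> 1" "\<forall>i. 0 \<le> rpi r b $ i \<and> rpi r b $ i \<le> 1"
      using rpi_bounds[OF assms(3)] \<sigma> bpol by auto
    have l1: "Vpi g P r \<sigma> $ s \<le> Vpi x P r \<sigma> $ s + (g - x) / ((1 - g) * (1 - x))"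
      unfolding Vpi_val using val_lip(1)[OF st[OF \<sigma>] x0 less_imp_le[OF x(2)] g(2) rb(1)] .
    have l2: "Vpi x P r b $ s \<le> Vpi g P r b $ s"
      unfolding Vpi_val using val_lip(2)[OF st[OF bpol] x0 less_imp_le[OF x(2)] g(2) rb(2)] .
    have "(g - x) / ((1 - g) * (1 - x)) \<le> (g - x) / ((1 - g) * (1 - g))"
      using x g t unfolding x_def by (intro divide_left_mono mult_left_mono mult_pos_pos) auto
    also have "\<dots> = t / (1 - g)^2" unfolding x_def by (simp add: power2_eq_square)
    also have "\<dots> \<le> \<delta> / 2" using g unfolding t_def by (simp add: divide_le_eq)
    finally have "(g - x) / ((1 - g) * (1 - x)) \<le> \<delta> / 2" .
    moreover obtain E where E: "E = (g - x) / ((1 - g) * (1 - x))" by simp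
    ultimately have "E \<le> \<delta> / 2" "Vpi g P r \<sigma> $ s \<le> Vpi x P r \<sigma> $ s + E" using l1 by auto
    moreover have "Vpi x P r \<sigma> $ s \<le> Vpi x P r b $ s" by (rule near[OF x])
    ultimately have "Vpi g P r \<sigma> $ s \<le> Vpi g P r b $ s + E" using l2 by linarith
    then show False using \<open>E \<le> \<delta> / 2\<close> \<delta> unfolding \<delta>_def by (rule aux_contra)
  qed
qed



lemma cesaro_bounded:
  fixes X :: "nat \<Rightarrow> real^'s::finite"
  assumes "\<And>T. norm (\<Sum>t<T. (X t - L)) \<le> C"
  shows "cesaro_lim X = L"
proof -
  have eq: "(1/real T) *\<^sub>R (\<Sum>t<T. X t) = L + (1/real T) *\<^sub>R (\<Sum>t<T. (X t - L))" if "T > 0" for T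
    using that by (simp add: sum_subtractf scaleR_diff_right sum_constant_scaleR del: sum_constant)
  have C0: "0 \<le> C" using assms[of 0] by simp
  have z: "(\<lambda>T. (1/real T) *\<^sub>R (\<Sum>t<T. (X t - L))) \<longlonglongrightarrow> 0"
  proof (rule Lim_null_comparison)
    show "\<forall>\<^sub>F T in sequentially. norm ((1/real T) *\<^sub>R (\<Sum>t<T. (X t - L))) \<le> C * (1 / real T)"
      using assms C0 by (auto intro!: always_eventually simp: divide_simps mult.commute)
    show "(\<lambda>T. C * (1 / real T)) \<longlonglongrightarrow> 0"
      using tendsto_mult[OF tendsto_const lim_1_over_n, of C] by simp
  qed
  have "(\<lambda>T. L + (1/real T) *\<^sub>R (\<Sum>t<T. (X t - L))) \<longlonglongrightarrow> L"
    using tendsto_add[OF tendsto_const z, of L] by simp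
  then have "(\<lambda>T. (1/real T) *\<^sub>R (\<Sum>t<T. X t)) \<longlonglongrightarrow> L"
    by (rule Lim_transform_eventually) (auto intro!: eventually_sequentiallyI[of 1] simp: eq)
  then show ?thesis unfolding cesaro_lim_def by (rule limI)
qed



lemma Min_range_ge: "(\<And>j. B \<le> f j) \<Longrightarrow> B \<le> Min (range (f :: 'b::finite \<Rightarrow> real))"
  by (simp add: Min_ge_iff)

lemma range_Max_attained: "\<exists>i. f i = Max (range (f :: 'b::finite \<Rightarrow> real))"
proof -
  have "Max (range f) \<in> range f" by (rule Max_in) auto
  then show ?thesis by (metis imageE)
qed

lemma range_Min_attained: "\<exists>i. f i = Min (range (f :: 'b::finite \<Rightarrow> real))"
proof -
  have "Min (range f) \<in> range f" by (rule Min_in) auto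
  then show ?thesis by (metis imageE)
qed

lemma stoch_one: "stoch K \<Longrightarrow> K *v 1 = 1"
  by (simp add: vec_eq_iff mv_comp stoch_def)

lemma bias_anch:
  fixes P :: "'s::finite \<Rightarrow> 'a::finite \<Rightarrow> 's \<Rightarrow> real"
  assumes "is_kernel P" "2 \<le> n" "is_policy b"
  shows "\<exists>C. \<forall>s. bias (anchored n s0 P) r b $ s = Vpi (1 - 1/real n) P r b $ s + C"
proof -
  define g where "g = 1 - 1/real n"
  have g: "0 < g" "g < 1" using assms(2) unfolding g_def by auto
  define K where "K = Ppi (anchored n s0 P) b"
  have stK: "stoch K" unfolding K_def using stoch_Ppi[OF anch_kernel[OF assms(1)] assms(3)] assms(2) by simp
  have stP: "stoch (Ppi P b)" using stoch_Ppi[OF assms(1,3)] .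
  have Kv: "(K *v v)$i = g * (Ppi P b *v v)$i + (1/real n) * v$s0" for v i
    unfolding K_def g_def by (rule Ppi_anch[OF assms(3)])
  define u where "u = Vpi g P r b"
  have ueq: "u$i = rpi r b $ i + g * (Ppi P b *v u)$i" for i
    unfolding u_def Vpi_val using val_eq[OF stP] g by simp
  define \<rho> where "\<rho> = (1/real n) * u$s0"
  have rpi_eq: "rpi r b = u - K *v u + \<rho> *\<^sub>R 1"
    by (simp add: vec_eq_iff Kv \<rho>_def) (metis ueq add_diff_cancel_right')
  define f where "f = (\<lambda>v. K *v v)"
  have lin: "(f^^t) (a - c + q *\<^sub>R 1) = (f^^t) a - (f^^t) c + q *\<^sub>R 1" for t a c q
    by (induction t) (simp_all add: f_def matrix_vector_mult_diff_distrib matrix_vector_right_distrib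
          matrix_vector_mult_scaleR stoch_one[OF stK])
  define w where "w t = (f^^t) u" for t
  have w0: "w 0 = u" by (simp add: w_def)
  have wS: "w (Suc t) $ i = (K *v w t) $ i" for t i by (simp add: w_def f_def)
  have pw: "(f^^t) (rpi r b) = w t - w (Suc t) + \<rho> *\<^sub>R 1" for t
    unfolding rpi_eq lin w_def by (simp add: f_def funpow_swap1)
  define Mx where "Mx t = Max (range (\<lambda>i. w t $ i))" for t
  define mn where "mn t = Min (range (\<lambda>i. w t $ i))" for t
  have wle: "mn t \<le> w t $ i" "w t $ i \<le> Mx t" for t i unfolding Mx_def mn_def by auto
  have Mx_dec: "Mx (Suc t) \<le> Mx t" for t
    unfolding Mx_def[of "Suc t"] by (rule Max_range_le) (simp add: wS stoch_le_Max[OF stK] Mx_def)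
  have mn_inc: "mn t \<le> mn (Suc t)" for t
    unfolding mn_def[of "Suc t"] by (rule Min_range_ge) (simp add: wS stoch_ge_Min[OF stK] mn_def)
  have sp: "Mx (Suc t) - mn (Suc t) \<le> g * (Mx t - mn t)" for t
  proof -
    obtain i where i: "w (Suc t) $ i = Mx (Suc t)" unfolding Mx_def using range_Max_attained by blast
    obtain j where j: "w (Suc t) $ j = mn (Suc t)" unfolding mn_def using range_Min_attained by blast
    have "w (Suc t) $ i - w (Suc t) $ j = g * ((Ppi P b *v w t)$i - (Ppi P b *v w t)$j)"
      unfolding wS Kv by (simp add: algebra_simps)
    also have "\<dots> \<le> g * (Mx t - mn t)"
      using stoch_le_Max[OF stP, of "w t" i] stoch_ge_Min[OF stP, of "w t" j] g
      unfolding Mx_def mn_def by (intro mult_left_mono) auto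
    finally show ?thesis using i j by simp
  qed
  define sp0 where "sp0 = Mx 0 - mn 0"
  have spt: "Mx t - mn t \<le> g^t * sp0" for t
  proof (induction t)
    case 0 then show ?case by (simp add: sp0_def)
  next
    case (Suc t)
    have "Mx (Suc t) - mn (Suc t) \<le> g * (Mx t - mn t)" by (rule sp)
    also have "\<dots> \<le> g * (g^t * sp0)" using Suc g by (intro mult_left_mono) auto
    finally show ?case by simp
  qed
  have sp0: "0 \<le> sp0" using wle[of 0 undefined] unfolding sp0_def by linarith
  have Mxdec: "decseq Mx" using Mx_dec by (simp add: decseq_SucI)
  have mninc: "incseq mn" using mn_inc by (simp add: incseq_SucI)
  have mnb: "\<forall>t. mn t \<le> Mx 0"
  proof
    fix t have "mn t \<le> Mx t" using wle[of t undefined] by linarith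
    also have "Mx t \<le> Mx 0" using Mxdec by (simp add: decseqD)
    finally show "mn t \<le> Mx 0" .
  qed
  obtain l where l: "mn \<longlonglongrightarrow> l" "\<forall>t. mn t \<le> l" using incseq_convergent[OF mninc mnb] by blast
  have lM: "l \<le> Mx t" for t
  proof (rule LIMSEQ_le_const2[OF l(1)], intro exI allI impI)
    fix m assume "t \<le> m"
    have "mn m \<le> Mx m" using wle[of m undefined] by linarith
    also have "Mx m \<le> Mx t" using Mxdec \<open>t \<le> m\<close> by (simp add: decseqD)
    finally show "mn m \<le> Mx t" .
  qed
  have wb: "\<bar>w t $ i - l\<bar> \<le> g^t * sp0" for t i
    using wle[of t i] l(2)[rule_format, of t] lM[of t] spt[of t] by (simp add: abs_le_iff)
  have gpow: "g^t \<le> 1" for t using g by (simp add: power_le_one)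
  have wb1: "\<bar>w t $ i - l\<bar> \<le> sp0" for t i
  proof -
    have "g^t * sp0 \<le> 1 * sp0" using gpow[of t] sp0 by (rule mult_right_mono)
    then show ?thesis using wb[of t i] by simp
  qed
  have ginf: "cesaro_lim (\<lambda>t. (f^^t) (rpi r b)) = \<rho> *\<^sub>R 1"
  proof (rule cesaro_bounded)
    fix T
    have "(\<Sum>t<T. ((f^^t) (rpi r b) - \<rho> *\<^sub>R 1)) = u - w T"
      unfolding pw by (simp add: sum_lessThan_telescope' w0)
    moreover have "norm (u - w T) \<le> (\<Sum>i\<in>UNIV. \<bar>u$i - l\<bar> + sp0)"
    proof -
      have "norm (u - w T) \<le> (\<Sum>i\<in>UNIV. \<bar>(u - w T)$i\<bar>)" by (rule norm_le_l1_cart)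
      also have "\<dots> \<le> (\<Sum>i\<in>UNIV. \<bar>u$i - l\<bar> + sp0)"
      proof (rule sum_mono)
        fix i show "\<bar>(u - w T)$i\<bar> \<le> \<bar>u$i - l\<bar> + sp0"
          using wb1[of T i] by (simp add: abs_le_iff) linarith
      qed
      finally show ?thesis .
    qed
    ultimately show "norm (\<Sum>t<T. ((f^^t) (rpi r b) - \<rho> *\<^sub>R 1)) \<le> (\<Sum>i\<in>UNIV. \<bar>u$i - l\<bar> + sp0)"
      by simp
  qed
  have bias_eq: "bias (anchored n s0 P) r b = cesaro_lim (\<lambda>T. u - w T)"
  proof -
    have "(\<lambda>v. Ppi (anchored n s0 P) b *v v) = f" unfolding f_def K_def ..
    then have "bias (anchored n s0 P) r b = cesaro_lim (\<lambda>T. \<Sum>t<T. (f^^t) (rpi r b) - \<rho> *\<^sub>R 1)"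
      unfolding bias_def Let_def by (simp only: \<open>(\<lambda>v. Ppi (anchored n s0 P) b *v v) = f\<close> ginf)
    also have "(\<lambda>T. \<Sum>t<T. (f^^t) (rpi r b) - \<rho> *\<^sub>R 1) = (\<lambda>T. u - w T)"
      unfolding pw by (simp add: sum_lessThan_telescope' w0)
    finally show ?thesis .
  qed
  have "cesaro_lim (\<lambda>T. u - w T) = u - l *\<^sub>R 1"
  proof (rule cesaro_bounded)
    fix N
    have "norm (\<Sum>T<N. (u - w T - (u - l *\<^sub>R 1))) \<le> (\<Sum>i\<in>UNIV. \<bar>(\<Sum>T<N. (u - w T - (u - l *\<^sub>R 1)))$i\<bar>)"
      by (rule norm_le_l1_cart)
    also have "\<dots> \<le> (\<Sum>i\<in>(UNIV::'s set). sp0 / (1 - g))"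
    proof (rule sum_mono)
      fix i
      have "\<bar>(\<Sum>T<N. (u - w T - (u - l *\<^sub>R 1)))$i\<bar> = \<bar>\<Sum>T<N. (l - w T $ i)\<bar>"
        by (simp add: sum_component)
      also have "\<dots> \<le> (\<Sum>T<N. \<bar>l - w T $ i\<bar>)" by (rule sum_abs)
      also have "\<dots> \<le> (\<Sum>T<N. g^T * sp0)" using wb by (intro sum_mono) (simp add: abs_minus_commute)
      also have "\<dots> = sp0 * ((1 - g^N) / (1 - g))"
      proof -
        have "(\<Sum>T<N. g^T * sp0) = (\<Sum>T<N. g^T) * sp0" by (simp add: sum_distrib_right)
        also have "\<dots> = sp0 * ((1 - g^N) / (1 - g))" using g by (simp add: sum_gp_strict)
        finally show ?thesis .
      qed
      also have "\<dots> \<le> sp0 * (1 / (1 - g))"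
        using g sp0 by (intro mult_left_mono divide_right_mono) auto
      finally show "\<bar>(\<Sum>T<N. (u - w T - (u - l *\<^sub>R 1)))$i\<bar> \<le> sp0 / (1 - g)" by simp
    qed
    finally show "norm (\<Sum>T<N. (u - w T - (u - l *\<^sub>R 1))) \<le> (\<Sum>i\<in>(UNIV::'s set). sp0 / (1 - g))" .
  qed
  then show ?thesis
    by (intro exI[of _ "- l"]) (simp add: bias_eq u_def g_def)
qed



lemma qval_avg:
  assumes "is_policy pol"
  shows "(\<Sum>a\<in>UNIV. pol s a * qval r (anchored n s0 P) h s a)
         = rpi r pol $ s + (1 - 1/real n) * (Ppi P pol *v (\<chi> j. h j))$s + (1/real n) * h s0"
proof -
  have q: "qval r (anchored n s0 P) h s a = (r s a + (1 - 1/real n) * (\<Sum>s'\<in>UNIV. P s a s' * (\<chi> j. h j)$s')) + (1/real n) * h s0" for a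
  proof -
    have "(\<Sum>s'\<in>UNIV. anchored n s0 P s a s' * h s') = (\<Sum>s'\<in>UNIV. (1 - 1/real n) * (P s a s' * h s') + (if s' = s0 then (1/real n) * h s' else 0))"
      unfolding anchored_def by (rule sum.cong) (auto simp: algebra_simps)
    also have "\<dots> = (1 - 1/real n) * (\<Sum>s'\<in>UNIV. P s a s' * (\<chi> j. h j)$s') + (1/real n) * h s0"
      by (simp add: sum.distrib sum.delta' sum_distrib_left)
    finally show ?thesis unfolding qval_def by simp
  qed
  have "(\<Sum>a\<in>UNIV. pol s a * qval r (anchored n s0 P) h s a)
     = (\<Sum>a\<in>UNIV. pol s a * (r s a + (1 - 1/real n) * (\<Sum>s'\<in>UNIV. P s a s' * (\<chi> j. h j)$s'))) + (\<Sum>a\<in>UNIV. pol s a) * ((1/real n) * h s0)"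
    unfolding q distrib_left sum.distrib by (simp add: sum_distrib_right sum_divide_distrib)
  also have "\<dots> = rpi r pol $ s + (1 - 1/real n) * (Ppi P pol *v (\<chi> j. h j))$s + (1/real n) * h s0"
    using assms unfolding bellman_form[symmetric] by (simp add: is_policy_def)
  finally show ?thesis .
qed

lemma sp_shift: "sp_norm (\<lambda>s. f s + (C::real)) = sp_norm (f :: 's::finite \<Rightarrow> real)"
  unfolding sp_norm_def
  using Max_add_commute[of "UNIV::'s set" f C] Min_add_commute[of "UNIV::'s set" f C] by simp

theorem mainTheorem18:
  fixes P :: "'s::finite \<Rightarrow> 'a::finite \<Rightarrow> 's \<Rightarrow> real"
    and r :: "'s \<Rightarrow> 'a \<Rightarrow> real"
    and n :: nat and s0 :: 's
    and pol :: "'s \<Rightarrow> 'a \<Rightarrow> real" and h :: "'s \<Rightarrow> real"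
  assumes "is_kernel P"
    and "\<forall>s a. 0 \<le> r s a \<and> r s a \<le> 1"
    and "n \<ge> 2"
    and "is_policy pol"
    and "greedy pol (qval r (anchored n s0 P) h)"
  shows "\<forall>s. Vstar (1 - 1 / real n) P r $ s - Vpi (1 - 1 / real n) P r pol $ s
             \<le> (real n - 1) * sp_norm (\<lambda>s'. optimal_bias (anchored n s0 P) r $ s' - h s')"
proof
  fix s
  define g where "g = 1 - 1/real n"
  have g: "0 < g" "g < 1" using assms(3) unfolding g_def by auto
  define b where "b = (SOME pol. blackwell_optimal (anchored n s0 P) r pol)"
  have bw: "blackwell_optimal (anchored n s0 P) r b"
    unfolding b_def using someI_ex[OF bw_exists[OF assms(1,3)]] .
  have bpol: "is_policy b" using bw by (simp add: blackwell_optimal_def)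
  have optb: "\<And>\<sigma> t. is_policy \<sigma> \<Longrightarrow> Vpi g P r \<sigma> $ t \<le> Vpi g P r b $ t"
    unfolding g_def using bw_opt[OF assms(1,3,2) bw] .
  have Vs: "Vstar g P r $ t = Vpi g P r b $ t" for t
  proof -
    have "(SUP pol\<in>{pol. is_policy pol}. Vpi g P r pol $ t) = Vpi g P r b $ t"
      by (rule cSup_eq_maximum) (use bpol optb in auto)
    then show ?thesis by (simp add: Vstar_def)
  qed
  obtain C where C: "\<And>t. optimal_bias (anchored n s0 P) r $ t = Vpi g P r b $ t + C"
    using bias_anch[OF assms(1,3) bpol, of s0 r] unfolding optimal_bias_def b_def[symmetric] g_def by blast
  define e where "e t = Vpi g P r b $ t - h t" for t
  define S where "S = sp_norm e"
  have spS: "sp_norm (\<lambda>s'. optimal_bias (anchored n s0 P) r $ s' - h s') = S"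
  proof -
    have "(\<lambda>s'. optimal_bias (anchored n s0 P) r $ s' - h s') = (\<lambda>s'. e s' + C)"
      by (simp add: C e_def algebra_simps)
    then show ?thesis unfolding S_def by (simp add: sp_shift)
  qed
  let ?hv = "(\<chi> j. h j) :: real^'s"
  let ?Vb = "Vpi g P r b" and ?Vp = "Vpi g P r pol"
  have stb: "stoch (Ppi P b)" and stp: "stoch (Ppi P pol)"
    using stoch_Ppi[OF assms(1)] bpol assms(4) by auto
  have gr: "rpi r b $ i + g * (Ppi P b *v ?hv)$i \<le> rpi r pol $ i + g * (Ppi P pol *v ?hv)$i" for i
  proof -
    have "(\<Sum>a\<in>UNIV. b i a * qval r (anchored n s0 P) h i a) \<le> Max (range (qval r (anchored n s0 P) h i))"
      using bpol by (intro policy_avg_le) auto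
    also have "\<dots> = (\<Sum>a\<in>UNIV. pol i a * qval r (anchored n s0 P) h i a)"
      using assms(5) by (simp add: greedy_def)
    finally show ?thesis unfolding qval_avg[OF bpol] qval_avg[OF assms(4)] g_def by simp
  qed
  have eb: "Min (range e) \<le> e t" "e t \<le> Max (range e)" for t by auto
  define D where "D = ?Vb - ?Vp"
  have "\<forall>i. D$i \<le> g * S + g * (Ppi P pol *v D)$i"
  proof
    fix i
    have Vb: "?Vb$i = rpi r b $ i + g * (Ppi P b *v ?Vb)$i"
      unfolding Vpi_val by (rule val_eq[OF stb]) (use g in auto)
    have Vp: "?Vp$i = rpi r pol $ i + g * (Ppi P pol *v ?Vp)$i"
      unfolding Vpi_val by (rule val_eq[OF stp]) (use g in auto)
    have ev: "(?Vb - ?hv)$j = e j" for j by (simp add: e_def)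
    have m1: "(Ppi P b *v (?Vb - ?hv))$i \<le> Max (range e)"
      using stoch_le_Max[OF stb, of "?Vb - ?hv" i] unfolding ev by simp
    have m2: "Min (range e) \<le> (Ppi P pol *v (?Vb - ?hv))$i"
      using stoch_ge_Min[OF stp, of "?Vb - ?hv" i] unfolding ev by simp
    have "D$i \<le> g * ((Ppi P b *v (?Vb - ?hv))$i - (Ppi P pol *v (?Vb - ?hv))$i) + g * (Ppi P pol *v D)$i"
      using Vb Vp gr[of i] unfolding D_def
      by (simp add: matrix_vector_mult_diff_distrib algebra_simps)
    also have "\<dots> \<le> g * S + g * (Ppi P pol *v D)$i"
      using m1 m2 g unfolding S_def sp_norm_def by (intro add_right_mono mult_left_mono) auto
    finally show "D$i \<le> g * S + g * (Ppi P pol *v D)$i" .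
  qed
  from max_principle[OF stp less_imp_le[OF g(1)] g(2) this, of s]
  have "D$s \<le> g * S / (1 - g)" .
  also have "g * S / (1 - g) = (real n - 1) * S"
    using assms(3) unfolding g_def by (simp add: field_simps)
  finally show "Vstar (1 - 1 / real n) P r $ s - Vpi (1 - 1 / real n) P r pol $ s
             \<le> (real n - 1) * sp_norm (\<lambda>s'. optimal_bias (anchored n s0 P) r $ s' - h s')"
    unfolding spS using Vs[of s] unfolding D_def g_def by simp
qed

end
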